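(* Let $\{\mathcal{G}_i:i\in I\}$ be a sliced system. Then for each $i\in I$ there exist functions $h^-_i,h^+_i\in C(\mathbb{R},\mathbb{R}^* )$ such that $\mathcal{G}_i\subseteq(h^-_i,h^+_i)$ and $h^+_i\le h^-_j$ whenever $i<j$.
   Context: $\mathbb{R}^*=\mathbb{R}\cup\{-\infty,\infty\}$ with its usual order topology; for $f,h\in C(\mathbb{R},\mathbb{R}^* )$, $f\le h$ means $f(x)\le h(x)$ for all $x$, and $(f,h)=\{g\in C(\mathbb{R},\mathbb{R}):(\forall x)\,f(x)<g(x)<h(x)\}$. Let $(I,<)$ be a linearly ordered set and for each $i\in I$ let $\mathcal{G}_i\subseteq C(\mathbb{R},\mathbb{R})$ be nonempty. The indexed system $\{\mathcal{G}_i:i\in I\}$ is sliced if for every $i\in I$ there exist $g^-_i,g^+_i\in C(\mathbb{R},\mathbb{R}^* )$ with $\bigcup_{j<i}\mathcal{G}_j\subseteq(-\infty,g^-_i)$, $\mathcal{G}_i\subseteq(g^-_i,g^+_i)$, and $\bigcup_{j>i}\mathcal{G}_j\subseteq(g^+_i,\infty)$. *)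

theory Defs
  imports "HOL-Analysis.Analysis" "HOL-Library.Extended_Real"
begin

definition cont_ext :: "(real \<Rightarrow> ereal) \<Rightarrow> bool" where
  "cont_ext f \<longleftrightarrow> continuous_on UNIV f"

definition band :: "(real \<Rightarrow> ereal) \<Rightarrow> (real \<Rightarrow> ereal) \<Rightarrow> (real \<Rightarrow> real) set" where
  "band f h = {g. continuous_on UNIV g \<and> (\<forall>x. f x < ereal (g x) \<and> ereal (g x) < h x)}"

definition sliced :: "'i::linorder set \<Rightarrow> ('i \<Rightarrow> (real \<Rightarrow> real) set) \<Rightarrow> bool" where
  "sliced I G \<longleftrightarrow> (\<forall>i\<in>I. \<exists>gm gp. cont_ext gm \<and> cont_ext gp \<and>
      (\<Union>j\<in>{j\<in>I. j < i}. G j) \<subseteq> band (\<lambda>_. -\<infinity>) gm \<and>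
      G i \<subseteq> band gm gp \<and>
      (\<Union>j\<in>{j\<in>I. i < j}. G j) \<subseteq> band gp (\<lambda>_. \<infinity>))"

end

theory Submission
  imports Defs
begin

theorem lemma5p3:
  fixes I :: "'i::linorder set" and G :: "'i \<Rightarrow> (real \<Rightarrow> real) set"
  assumes "\<forall>i\<in>I. G i \<noteq> {} \<and> G i \<subseteq> {g. continuous_on UNIV g}"
    and "sliced I G"
  shows "\<exists>hm hp :: 'i \<Rightarrow> real \<Rightarrow> ereal.
           (\<forall>i\<in>I. cont_ext (hm i) \<and> cont_ext (hp i) \<and> G i \<subseteq> band (hm i) (hp i)) \<and>
           (\<forall>i\<in>I. \<forall>j\<in>I. i < j \<longrightarrow> (\<forall>x. hp i x \<le> hm j x))"
proof -
  define Q where "Q i a b \<longleftrightarrow> cont_ext a \<and> cont_ext b \<and>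
      (\<Union>j\<in>{j\<in>I. j < i}. G j) \<subseteq> band (\<lambda>_. -\<infinity>) a \<and>
      G i \<subseteq> band a b \<and>
      (\<Union>j\<in>{j\<in>I. i < j}. G j) \<subseteq> band b (\<lambda>_. \<infinity>)" for i a b
  have "\<forall>i\<in>I. \<exists>a b. Q i a b"
    using assms(2) unfolding sliced_def Q_def by blast
  hence "\<forall>i\<in>I. \<exists>p. Q i (fst p) (snd p)" by simp
  then obtain P where PQ: "\<forall>i\<in>I. Q i (fst (P i)) (snd (P i))"
    by (rule bchoice[THEN exE])
  have P: "cont_ext (fst (P i)) \<and> cont_ext (snd (P i)) \<and>
      (\<Union>j\<in>{j\<in>I. j < i}. G j) \<subseteq> band (\<lambda>_. -\<infinity>) (fst (P i)) \<and>
      G i \<subseteq> band (fst (P i)) (snd (P i)) \<and>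
      (\<Union>j\<in>{j\<in>I. i < j}. G j) \<subseteq> band (snd (P i)) (\<lambda>_. \<infinity>)" if "i\<in>I" for i
    using PQ that unfolding Q_def by blast
  define gm where "gm i = fst (P i)" for i
  define gp where "gp i = snd (P i)" for i
  have cm: "cont_ext (gm i)" and cp: "cont_ext (gp i)" if "i\<in>I" for i
    using P[OF that] by (auto simp: gm_def gp_def)
  have own: "gm i x < ereal (g x) \<and> ereal (g x) < gp i x" if "i\<in>I" "g \<in> G i" for i g x
    using P[OF that(1)] that(2) by (auto simp: gm_def gp_def band_def)
  have below: "ereal (g x) < gm i x" if "i\<in>I" "j\<in>I" "j < i" "g \<in> G j" for i j g x
  proof -
    have "g \<in> band (\<lambda>_. -\<infinity>) (gm i)" using P[OF that(1)] that(2-4) unfolding gm_def by blast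
    thus ?thesis by (auto simp: band_def)
  qed
  have above: "gp i x < ereal (g x)" if "i\<in>I" "j\<in>I" "i < j" "g \<in> G j" for i j g x
  proof -
    have "g \<in> band (gp i) (\<lambda>_. \<infinity>)" using P[OF that(1)] that(2-4) unfolding gp_def by blast
    thus ?thesis by (auto simp: band_def)
  qed
  define isucc where "isucc i s \<longleftrightarrow> s\<in>I \<and> i<s \<and> (\<forall>k\<in>I. \<not>(i<k \<and> k<s))" for i s
  define hp where "hp i = (if \<exists>s. isucc i s then (\<lambda>x. min (gp i x) (gm (SOME s. isucc i s) x)) else gp i)" for i
  have uniq: "s = t" if "isucc i s" "isucc i t" for i s t
    using that unfolding isucc_def by (metis neqE)
  show ?thesis
  proof (intro exI conjI ballI allI impI)
    fix i assume i: "i\<in>I"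
    show "cont_ext (gm i)" using cm[OF i] .
    show "cont_ext (hp i)"
    proof (cases "\<exists>s. isucc i s")
      case True
      hence s: "isucc i (SOME s. isucc i s)" by (metis someI)
      hence "(SOME s. isucc i s) \<in> I" unfolding isucc_def by blast
      hence "continuous_on UNIV (\<lambda>x. min (gp i x) (gm (SOME s. isucc i s) x))"
        using cp[OF i] cm unfolding cont_ext_def by (intro continuous_on_min) auto
      thus ?thesis using True unfolding hp_def cont_ext_def by simp
    next
      case False thus ?thesis using cp[OF i] unfolding hp_def by auto
    qed
    show "G i \<subseteq> band (gm i) (hp i)"
    proof
      fix g assume g: "g \<in> G i"
      have gc: "continuous_on UNIV g" using assms(1) i g by blast
      show "g \<in> band (gm i) (hp i)"
      proof (cases "\<exists>s. isucc i s")
        case True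
        hence s: "isucc i (SOME s. isucc i s)" by (metis someI)
        hence "(SOME s. isucc i s) \<in> I" "i < (SOME s. isucc i s)" unfolding isucc_def by blast+
        hence "\<And>x. ereal (g x) < gm (SOME s. isucc i s) x" using below i g by blast
        thus ?thesis using True own[OF i g] gc unfolding hp_def band_def by simp
      next
        case False thus ?thesis using own[OF i g] gc unfolding hp_def band_def by auto
      qed
    qed
  next
    fix i j x assume i: "i\<in>I" and j: "j\<in>I" and ij: "i<j"
    have hpg: "hp i x \<le> gp i x" unfolding hp_def by auto
    show "hp i x \<le> gm j x"
    proof (cases "\<exists>k\<in>I. i<k \<and> k<j")
      case True
      then obtain k where k: "k\<in>I" "i<k" "k<j" by blast
      then obtain g where g: "g \<in> G k" using assms(1) by blast
      have "gp i x < ereal (g x)" using above[OF i k(1) k(2) g] .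
      also have "\<dots> < gm j x" using below[OF j k(1) k(3) g] .
      finally show ?thesis using hpg by simp
    next
      case False
      hence sj: "isucc i j" unfolding isucc_def using j ij by blast
      hence "(SOME s. isucc i s) = j" using uniq by (metis someI)
      thus ?thesis using sj unfolding hp_def by auto
    qed
  qed
qed

end
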